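(* There are ring homomorphisms $$\mathrm{B}(\mathbb{Z})\longrightarrow\mathrm{B}(\mathcal{R})\longrightarrow\mathrm{B}(\mathbb{Z})$$ whose composition is the identity of $\mathrm{B}(\mathbb{Z})$.
   Context: $\mathrm{B}(\mathbb{Z})$ is the Burnside ring of finite $\mathbb{Z}$-sets: the Grothendieck ring of isomorphism classes of pairs $(X,\pi)$ with $X$ a finite set and $\pi$ a permutation of $X$, with addition induced by disjoint union and multiplication by cartesian product (with permutation $\pi\times\pi'$). A rack is a set $R$ with a binary operation $\rhd$ such that every left multiplication $\ell_a\colon b\mapsto a\rhd b$ is a bijection and $a\rhd(b\rhd c)=(a\rhd b)\rhd(a\rhd c)$ for all $a,b,c$. A subrack is a subset $S$ with $\ell_s(S)=S$ for all $s\in S$; a decomposition of $R$ into $S$ and $T$ means $S,T$ are disjoint subracks (possibly empty) with $S\cup T=R$. The Burnside ring of finite racks $\mathrm{B}(\mathcal{R})$ is the abelian group generated by symbols $b(R)$, one for each finite rack $R$, subject to $b(R_1)=b(R_2)$ whenever $R_1\cong R_2$ and $b(R)=b(S)+b(T)$ whenever $R$ decomposes into $S$ and $T$, with ring structure $b(R)b(R')=b(R\times R')$ (cartesian product, componentwise operation) and unit the class of the singleton. *)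

theory Defs
  imports Main "HOL-Algebra.Ring" "HOL-Library.Nat_Bijection"
begin

text \<open>Given a class of finite objects (predicate valid), an isomorphism relation,
 a decomposition relation (decomp X S T: X decomposes into S and T), a product and a unit,
 we form the abelian group generated by symbols b(X) (finitely supported integer-valued
 functions on objects), modulo the subgroup generated by b(X) - b(Y) for X iso Y and
 b(X) - b(S) - b(T) for decompositions, with multiplication induced by the product.\<close>

definition delta :: "'o \<Rightarrow> 'o \<Rightarrow> int" where
  "delta X = (\<lambda>Y. if Y = X then 1 else 0)"

definition fsupp :: "('o \<Rightarrow> bool) \<Rightarrow> ('o \<Rightarrow> int) set" where
  "fsupp valid = {f. finite {x. f x \<noteq> 0} \<and> (\<forall>x. f x \<noteq> 0 \<longrightarrow> valid x)}"

inductive_set relsub :: "('o \<Rightarrow> bool) \<Rightarrow> ('o \<Rightarrow> 'o \<Rightarrow> bool) \<Rightarrow> ('o \<Rightarrow> 'o \<Rightarrow> 'o \<Rightarrow> bool)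
    \<Rightarrow> ('o \<Rightarrow> int) set"
  for valid isom decomp where
  rel_zero: "(\<lambda>_. 0) \<in> relsub valid isom decomp"
| rel_iso: "valid X \<Longrightarrow> valid Y \<Longrightarrow> isom X Y \<Longrightarrow> (\<lambda>Z. delta X Z - delta Y Z) \<in> relsub valid isom decomp"
| rel_decomp: "valid X \<Longrightarrow> valid S \<Longrightarrow> valid T \<Longrightarrow> decomp X S T \<Longrightarrow>
      (\<lambda>Z. delta X Z - delta S Z - delta T Z) \<in> relsub valid isom decomp"
| rel_diff: "a \<in> relsub valid isom decomp \<Longrightarrow> b \<in> relsub valid isom decomp \<Longrightarrow>
      (\<lambda>Z. a Z - b Z) \<in> relsub valid isom decomp"

definition conv :: "('o \<Rightarrow> 'o \<Rightarrow> 'o) \<Rightarrow> ('o \<Rightarrow> int) \<Rightarrow> ('o \<Rightarrow> int) \<Rightarrow> ('o \<Rightarrow> int)" where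
  "conv prd a b = (\<lambda>Z. \<Sum>(X,Y) \<in> {(X,Y). a X \<noteq> 0 \<and> b Y \<noteq> 0 \<and> prd X Y = Z}. a X * b Y)"

definition bclass :: "('o \<Rightarrow> bool) \<Rightarrow> ('o \<Rightarrow> 'o \<Rightarrow> bool) \<Rightarrow> ('o \<Rightarrow> 'o \<Rightarrow> 'o \<Rightarrow> bool)
    \<Rightarrow> ('o \<Rightarrow> int) \<Rightarrow> ('o \<Rightarrow> int) set" where
  "bclass valid isom decomp a = {b \<in> fsupp valid. (\<lambda>Z. a Z - b Z) \<in> relsub valid isom decomp}"

definition burnside_ring :: "('o \<Rightarrow> bool) \<Rightarrow> ('o \<Rightarrow> 'o \<Rightarrow> bool) \<Rightarrow> ('o \<Rightarrow> 'o \<Rightarrow> 'o \<Rightarrow> bool)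
    \<Rightarrow> ('o \<Rightarrow> 'o \<Rightarrow> 'o) \<Rightarrow> 'o \<Rightarrow> (('o \<Rightarrow> int) set) ring" where
  "burnside_ring valid isom decomp prd u =
    (let cl = bclass valid isom decomp;
         rep = (\<lambda>A. SOME a. a \<in> A) in
     \<lparr> carrier = cl ` fsupp valid,
       monoid.mult = (\<lambda>A B. cl (conv prd (rep A) (rep B))),
       one = cl (delta u),
       zero = cl (\<lambda>_. 0),
       add = (\<lambda>A B. cl (\<lambda>Z. rep A Z + rep B Z)) \<rparr>)"

text \<open>A finite Z-set is represented as (X, p) with X a finite set of naturals and p a
 permutation of X (values of p outside X are irrelevant; representations differing
 only there are isomorphic).\<close>

type_synonym zset = "nat set \<times> (nat \<Rightarrow> nat)"

definition zset_valid :: "zset \<Rightarrow> bool" where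
  "zset_valid A = (finite (fst A) \<and> bij_betw (snd A) (fst A) (fst A))"

definition zset_iso :: "zset \<Rightarrow> zset \<Rightarrow> bool" where
  "zset_iso A B = (\<exists>f. bij_betw f (fst A) (fst B) \<and>
      (\<forall>x\<in>fst A. f (snd A x) = snd B (f x)))"

definition zset_decomp :: "zset \<Rightarrow> zset \<Rightarrow> zset \<Rightarrow> bool" where
  "zset_decomp X S T = (fst S \<inter> fst T = {} \<and> fst S \<union> fst T = fst X \<and>
      snd X ` fst S = fst S \<and> snd X ` fst T = fst T \<and>
      snd S = snd X \<and> snd T = snd X)"

definition zset_prod :: "zset \<Rightarrow> zset \<Rightarrow> zset" where
  "zset_prod A B = (prod_encode ` (fst A \<times> fst B),
      (\<lambda>n. case prod_decode n of (x, y) \<Rightarrow> prod_encode (snd A x, snd B y)))"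

definition zset_unit :: zset where
  "zset_unit = ({0}, id)"

definition BZ :: "((zset \<Rightarrow> int) set) ring" where
  "BZ = burnside_ring zset_valid zset_iso zset_decomp zset_prod zset_unit"

type_synonym rack = "nat set \<times> (nat \<Rightarrow> nat \<Rightarrow> nat)"

definition rack_valid :: "rack \<Rightarrow> bool" where
  "rack_valid R = (finite (fst R) \<and>
      (\<forall>a\<in>fst R. bij_betw (snd R a) (fst R) (fst R)) \<and>
      (\<forall>a\<in>fst R. \<forall>b\<in>fst R. \<forall>c\<in>fst R.
          snd R a (snd R b c) = snd R (snd R a b) (snd R a c)))"

definition rack_iso :: "rack \<Rightarrow> rack \<Rightarrow> bool" where
  "rack_iso R Q = (\<exists>f. bij_betw f (fst R) (fst Q) \<and>
      (\<forall>a\<in>fst R. \<forall>b\<in>fst R. f (snd R a b) = snd Q (f a) (f b)))"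

definition is_subrack :: "rack \<Rightarrow> nat set \<Rightarrow> bool" where
  "is_subrack R S = (S \<subseteq> fst R \<and> (\<forall>s\<in>S. snd R s ` S = S))"

definition rack_decomp :: "rack \<Rightarrow> rack \<Rightarrow> rack \<Rightarrow> bool" where
  "rack_decomp R S T = (is_subrack R (fst S) \<and> is_subrack R (fst T) \<and>
      fst S \<inter> fst T = {} \<and> fst S \<union> fst T = fst R \<and>
      snd S = snd R \<and> snd T = snd R)"

definition rack_prod :: "rack \<Rightarrow> rack \<Rightarrow> rack" where
  "rack_prod R Q = (prod_encode ` (fst R \<times> fst Q),
      (\<lambda>n m. case prod_decode n of (a, a') \<Rightarrow> case prod_decode m of (b, b') \<Rightarrow>
          prod_encode (snd R a b, snd Q a' b')))"

definition rack_unit :: rack where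
  "rack_unit = ({0}, (\<lambda>_ _. 0))"

definition BR :: "((rack \<Rightarrow> int) set) ring" where
  "BR = burnside_ring rack_valid rack_iso rack_decomp rack_prod rack_unit"

end

theory Submission
  imports Defs
begin

definition supp :: "('o \<Rightarrow> int) \<Rightarrow> 'o set" where
  "supp a = {x. a x \<noteq> 0}"

definition push :: "('o \<Rightarrow> 'p) \<Rightarrow> ('o \<Rightarrow> int) \<Rightarrow> 'p \<Rightarrow> int" where
  "push \<phi> a = (\<lambda>W. \<Sum>X\<in>{X. a X \<noteq> 0 \<and> \<phi> X = W}. a X)"

definition repr :: "'a set \<Rightarrow> 'a" where
  "repr A = (SOME a. a \<in> A)"

lemma delta_same [simp]: "delta X X = 1"
  by (simp add: delta_def)

lemma if_mult_diff_right: "(if c then x * (y - z) else 0) = (if c then x*y else 0) - (if c then x*z else (0::int))"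
  by (cases c) (simp_all add: right_diff_distrib)

lemma if_mult_diff_left: "(if c then (x - y) * z else 0) = (if c then x*z else 0) - (if c then y*z else (0::int))"
  by (cases c) (simp_all add: left_diff_distrib)

lemma sum_sing: "sum f {x} = f x"
  by simp

lemma fsupp_iff: "a \<in> fsupp v \<longleftrightarrow> finite (supp a) \<and> (\<forall>x\<in>supp a. v x)"
  by (auto simp: fsupp_def supp_def)

lemma supp_diff: "supp (\<lambda>Z. a Z - b Z) \<subseteq> supp a \<union> supp b"
  by (auto simp: supp_def)

lemma supp_delta: "supp (delta X) \<subseteq> {X}"
  by (auto simp: supp_def delta_def)

lemma finite_supp_delta: "finite (supp (delta X))"
  by (rule finite_subset[OF supp_delta]) simp

lemma finite_supp_diff: "finite (supp a) \<Longrightarrow> finite (supp b) \<Longrightarrow> finite (supp (\<lambda>Z. a Z - b Z))"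
  by (rule finite_subset[OF supp_diff]) simp

lemma push_expand:
  assumes "finite S" "supp a \<subseteq> S"
  shows "push \<phi> a W = (\<Sum>X\<in>S. if \<phi> X = W then a X else 0)"
proof -
  have "(\<Sum>X\<in>S. if \<phi> X = W then a X else 0) = (\<Sum>X\<in>{X\<in>S. \<phi> X = W}. a X)"
    using assms(1) by (simp add: sum.inter_filter)
  also have "\<dots> = (\<Sum>X\<in>{X. a X \<noteq> 0 \<and> \<phi> X = W}. a X)"
    by (rule sum.mono_neutral_right) (use assms in \<open>auto simp: supp_def\<close>)
  finally show ?thesis by (simp add: push_def)
qed

lemma conv_expand:
  assumes "finite A" "supp a \<subseteq> A" "finite B" "supp b \<subseteq> B"
  shows "conv p a b Z = (\<Sum>X\<in>A. \<Sum>Y\<in>B. if p X Y = Z then a X * b Y else 0)"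
proof -
  have "conv p a b Z = (\<Sum>(X,Y)\<in>A\<times>B. if p X Y = Z then a X * b Y else 0)"
    unfolding conv_def
    by (rule sum.mono_neutral_cong_left) (use assms in \<open>auto simp: supp_def split: if_splits\<close>)
  also have "\<dots> = (\<Sum>X\<in>A. \<Sum>Y\<in>B. if p X Y = Z then a X * b Y else 0)"
    by (rule sum.cartesian_product[symmetric])
  finally show ?thesis .
qed

lemma supp_push: "supp (push \<phi> a) \<subseteq> \<phi> ` supp a"
proof
  fix W assume "W \<in> supp (push \<phi> a)"
  then have "push \<phi> a W \<noteq> 0" by (simp add: supp_def)
  then have "{X. a X \<noteq> 0 \<and> \<phi> X = W} \<noteq> {}"
    unfolding push_def by (metis sum.empty)
  then show "W \<in> \<phi> ` supp a" by (auto simp: supp_def)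
qed

lemma supp_conv: "supp (conv p a b) \<subseteq> (\<lambda>(X,Y). p X Y) ` (supp a \<times> supp b)"
proof
  fix W assume "W \<in> supp (conv p a b)"
  then have "conv p a b W \<noteq> 0" by (simp add: supp_def)
  then have "{(X,Y). a X \<noteq> 0 \<and> b Y \<noteq> 0 \<and> p X Y = W} \<noteq> {}"
    unfolding conv_def by (metis sum.empty)
  then obtain X Y where "a X \<noteq> 0" "b Y \<noteq> 0" "p X Y = W" by blast
  then show "W \<in> (\<lambda>(X,Y). p X Y) ` (supp a \<times> supp b)"
    by (intro image_eqI[where x="(X,Y)"]) (auto simp: supp_def)
qed

lemma finite_supp_conv: "finite (supp a) \<Longrightarrow> finite (supp b) \<Longrightarrow> finite (supp (conv p a b))"
  by (rule finite_subset[OF supp_conv]) simp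

lemma finite_supp_push: "finite (supp a) \<Longrightarrow> finite (supp (push \<phi> a))"
  by (rule finite_subset[OF supp_push]) simp

lemma conv_diff_left:
  assumes "finite (supp a)" "finite (supp a')" "finite (supp b)"
  shows "conv p (\<lambda>Z. a Z - a' Z) b = (\<lambda>Z. conv p a b Z - conv p a' b Z)"
proof
  fix Z
  let ?A = "supp a \<union> supp a'" and ?B = "supp b"
  have e1: "conv p (\<lambda>Z. a Z - a' Z) b Z = (\<Sum>X\<in>?A. \<Sum>Y\<in>?B. if p X Y = Z then (a X - a' X) * b Y else 0)"
    by (rule conv_expand[OF _ supp_diff _ order_refl]) (use assms in auto)
  have e2: "conv p a b Z = (\<Sum>X\<in>?A. \<Sum>Y\<in>?B. if p X Y = Z then a X * b Y else 0)"
    by (rule conv_expand) (use assms in auto)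
  have e3: "conv p a' b Z = (\<Sum>X\<in>?A. \<Sum>Y\<in>?B. if p X Y = Z then a' X * b Y else 0)"
    by (rule conv_expand) (use assms in auto)
  show "conv p (\<lambda>Z. a Z - a' Z) b Z = conv p a b Z - conv p a' b Z"
    unfolding e1 e2 e3 sum_subtractf[symmetric]
    by (rule sum.cong[OF refl], rule sum.cong[OF refl]) (rule if_mult_diff_left)
qed

lemma conv_diff_right:
  assumes "finite (supp b)" "finite (supp b')" "finite (supp a)"
  shows "conv p a (\<lambda>Z. b Z - b' Z) = (\<lambda>Z. conv p a b Z - conv p a b' Z)"
proof
  fix Z
  let ?B = "supp b \<union> supp b'" and ?A = "supp a"
  have e1: "conv p a (\<lambda>Z. b Z - b' Z) Z = (\<Sum>X\<in>?A. \<Sum>Y\<in>?B. if p X Y = Z then a X * (b Y - b' Y) else 0)"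
    by (rule conv_expand[OF _ order_refl _ supp_diff]) (use assms in auto)
  have e2: "conv p a b Z = (\<Sum>X\<in>?A. \<Sum>Y\<in>?B. if p X Y = Z then a X * b Y else 0)"
    by (rule conv_expand) (use assms in auto)
  have e3: "conv p a b' Z = (\<Sum>X\<in>?A. \<Sum>Y\<in>?B. if p X Y = Z then a X * b' Y else 0)"
    by (rule conv_expand) (use assms in auto)
  show "conv p a (\<lambda>Z. b Z - b' Z) Z = conv p a b Z - conv p a b' Z"
    unfolding e1 e2 e3 sum_subtractf[symmetric]
    by (rule sum.cong[OF refl], rule sum.cong[OF refl]) (rule if_mult_diff_right)
qed

lemma conv_zero_left: "conv p (\<lambda>_. 0) b = (\<lambda>_. 0)"
  by (simp add: conv_def)

lemma conv_zero_right: "conv p a (\<lambda>_. 0) = (\<lambda>_. 0)"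
  by (simp add: conv_def)

lemma conv_delta_left[no_atp]:
  assumes "finite (supp b)"
  shows "conv p (delta X) b = push (p X) b"
proof
  fix Z
  have "conv p (delta X) b Z = (\<Sum>X'\<in>{X}. \<Sum>Y\<in>supp b. if p X' Y = Z then delta X X' * b Y else 0)"
    by (rule conv_expand) (use assms supp_delta[of X] in auto)
  also have "\<dots> = (\<Sum>Y\<in>supp b. if p X Y = Z then b Y else 0)"
    by (simp only: sum_sing delta_same mult_1_left mult_1_right)
  also have "\<dots> = push (p X) b Z"
    by (rule push_expand[OF assms, symmetric]) simp
  finally show "conv p (delta X) b Z = push (p X) b Z" .
qed

lemma conv_delta_right:
  assumes "finite (supp b)"
  shows "conv p b (delta X) = push (\<lambda>W. p W X) b"
proof
  fix Z
  have "conv p b (delta X) Z = (\<Sum>Y\<in>supp b. \<Sum>X'\<in>{X}. if p Y X' = Z then b Y * delta X X' else 0)"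
    by (rule conv_expand) (use assms supp_delta[of X] in auto)
  also have "\<dots> = (\<Sum>Y\<in>supp b. if p Y X = Z then b Y else 0)"
    by (simp only: sum_sing delta_same mult_1_left mult_1_right)
  also have "\<dots> = push (\<lambda>W. p W X) b Z"
    by (rule push_expand[OF assms, symmetric]) simp
  finally show "conv p b (delta X) Z = push (\<lambda>W. p W X) b Z" .
qed

lemma push_as_sum:
  assumes "finite (supp b)"
  shows "push \<psi> b = (\<lambda>Z. \<Sum>W\<in>supp b. b W * delta (\<psi> W) Z)"
proof
  fix Z show "push \<psi> b Z = (\<Sum>W\<in>supp b. b W * delta (\<psi> W) Z)"
    by (subst push_expand[OF assms order_refl]) (rule sum.cong[OF refl], simp add: delta_def)
qed

lemma push_diff:
  assumes "finite (supp a)" "finite (supp b)"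
  shows "push \<phi> (\<lambda>Z. a Z - b Z) = (\<lambda>W. push \<phi> a W - push \<phi> b W)"
proof
  fix W
  let ?S = "supp a \<union> supp b"
  have "finite ?S" using assms by simp
  have e1: "push \<phi> (\<lambda>Z. a Z - b Z) W = (\<Sum>X\<in>?S. if \<phi> X = W then a X - b X else 0)"
    by (rule push_expand) (use assms supp_diff[of a b] in auto)
  have e2: "push \<phi> a W = (\<Sum>X\<in>?S. if \<phi> X = W then a X else 0)"
    by (rule push_expand) (use assms in auto)
  have e3: "push \<phi> b W = (\<Sum>X\<in>?S. if \<phi> X = W then b X else 0)"
    by (rule push_expand) (use assms in auto)
  show "push \<phi> (\<lambda>Z. a Z - b Z) W = push \<phi> a W - push \<phi> b W"
    unfolding e1 e2 e3 sum_subtractf[symmetric]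
    by (rule sum.cong[OF refl]) (cases "\<phi> x = W"; simp)
qed

lemma push_zero: "push \<phi> (\<lambda>_. 0) = (\<lambda>_. 0)"
  by (simp add: push_def)

lemma push_delta: "push \<phi> (delta X) = delta (\<phi> X)"
proof
  fix W show "push \<phi> (delta X) W = delta (\<phi> X) W"
    by (subst push_expand[of "{X}" "delta X", OF _ supp_delta]) (simp_all add: delta_def)
qed


lemma supp_delta2: "supp (\<lambda>Z. delta X Z - delta Y Z) \<subseteq> {X, Y}"
  by (auto simp: supp_def delta_def)

lemma supp_delta3: "supp (\<lambda>Z. delta X Z - delta S Z - delta T Z) \<subseteq> {X, S, T}"
  by (auto simp: supp_def delta_def)

lemma relsub_fsupp: "r \<in> relsub v i d \<Longrightarrow> r \<in> fsupp v"
proof (induction rule: relsub.induct)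
  case rel_zero
  then show ?case by (simp add: fsupp_def)
next
  case (rel_iso X Y)
  have "finite (supp (\<lambda>Z. delta X Z - delta Y Z))"
    by (rule finite_subset[OF supp_delta2]) simp
  moreover have "\<forall>x\<in>supp (\<lambda>Z. delta X Z - delta Y Z). v x"
    using supp_delta2[of X Y] rel_iso by auto
  ultimately show ?case by (simp only: fsupp_iff)
next
  case (rel_decomp X S T)
  have "finite (supp (\<lambda>Z. delta X Z - delta S Z - delta T Z))"
    by (rule finite_subset[OF supp_delta3]) simp
  moreover have "\<forall>x\<in>supp (\<lambda>Z. delta X Z - delta S Z - delta T Z). v x"
    using supp_delta3[of X S T] rel_decomp by auto
  ultimately show ?case by (simp only: fsupp_iff)
next
  case (rel_diff a b)
  then have "finite (supp a)" "finite (supp b)" "\<forall>x\<in>supp a. v x" "\<forall>x\<in>supp b. v x"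
    by (simp_all add: fsupp_iff)
  moreover have "finite (supp (\<lambda>Z. a Z - b Z))"
    by (rule finite_supp_diff) fact+
  moreover have "\<forall>x\<in>supp (\<lambda>Z. a Z - b Z). v x"
    using supp_diff[of a b] calculation by blast
  ultimately show ?case by (simp only: fsupp_iff)
qed

lemma relsub_neg: "r \<in> relsub v i d \<Longrightarrow> (\<lambda>Z. - r Z) \<in> relsub v i d"
  using relsub.rel_diff[OF relsub.rel_zero, of r v i d] by simp

lemma relsub_add: "a \<in> relsub v i d \<Longrightarrow> b \<in> relsub v i d \<Longrightarrow> (\<lambda>Z. a Z + b Z) \<in> relsub v i d"
  using relsub.rel_diff[of a v i d "\<lambda>Z. - b Z"] relsub_neg[of b v i d] by simp

lemma relsub_sum:
  assumes "finite K" "\<And>k. k \<in> K \<Longrightarrow> f k \<in> relsub v i d"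
  shows "(\<lambda>Z. \<Sum>k\<in>K. f k Z) \<in> relsub v i d"
  using assms
proof (induction K rule: finite_induct)
  case empty
  then show ?case by (simp add: relsub.rel_zero)
next
  case (insert x F)
  have "(\<lambda>Z. f x Z + (\<Sum>k\<in>F. f k Z)) \<in> relsub v i d"
    by (rule relsub_add) (use insert in auto)
  then show ?case using insert by simp
qed

lemma relsub_smult_nat: "r \<in> relsub v i d \<Longrightarrow> (\<lambda>Z. int n * r Z) \<in> relsub v i d"
proof (induction n)
  case 0
  then show ?case by (simp add: relsub.rel_zero)
next
  case (Suc n)
  have "(\<lambda>Z. int n * r Z + r Z) \<in> relsub v i d"
    by (rule relsub_add) (use Suc in auto)
  then show ?case by (simp add: algebra_simps)
qed

lemma relsub_smult: "r \<in> relsub v i d \<Longrightarrow> (\<lambda>Z. c * r Z) \<in> relsub v i d"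
proof (cases "c \<ge> 0")
  case True
  assume r: "r \<in> relsub v i d"
  have "(\<lambda>Z. int (nat c) * r Z) \<in> relsub v i d" by (rule relsub_smult_nat[OF r])
  then show ?thesis using True by simp
next
  case False
  assume r: "r \<in> relsub v i d"
  have "(\<lambda>Z. - (int (nat (- c)) * r Z)) \<in> relsub v i d"
    by (rule relsub_neg[OF relsub_smult_nat[OF r]])
  then show ?thesis using False by simp
qed

lemma relsub_lincomb:
  assumes "finite K" "\<And>k. k \<in> K \<Longrightarrow> f k \<in> relsub v i d"
  shows "(\<lambda>Z. \<Sum>k\<in>K. c k * f k Z) \<in> relsub v i d"
proof -
  have "(\<lambda>Z. \<Sum>k\<in>K. (\<lambda>k Z. c k * f k Z) k Z) \<in> relsub v i d"
    by (rule relsub_sum[OF assms(1)], rule relsub_smult, rule assms(2))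
  then show ?thesis by simp
qed

definition req :: "('o \<Rightarrow> bool) \<Rightarrow> ('o \<Rightarrow> 'o \<Rightarrow> bool) \<Rightarrow> ('o \<Rightarrow> 'o \<Rightarrow> 'o \<Rightarrow> bool)
    \<Rightarrow> ('o \<Rightarrow> int) \<Rightarrow> ('o \<Rightarrow> int) \<Rightarrow> bool" where
  "req v i d a b \<longleftrightarrow> (\<lambda>Z. a Z - b Z) \<in> relsub v i d"

lemma req_refl: "req v i d a a"
  unfolding req_def using relsub.rel_zero by simp

lemma req_sym: "req v i d a b \<Longrightarrow> req v i d b a"
  unfolding req_def using relsub_neg[of "\<lambda>Z. a Z - b Z" v i d] by simp

lemma req_trans: "req v i d a b \<Longrightarrow> req v i d b c \<Longrightarrow> req v i d a c"
  unfolding req_def using relsub_add[of "\<lambda>Z. a Z - b Z" v i d "\<lambda>Z. b Z - c Z"] by simp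

lemma bclass_eq: "req v i d a b \<Longrightarrow> bclass v i d a = bclass v i d b"
  unfolding bclass_def req_def[symmetric]
  using req_trans req_sym by blast

lemma bclass_self: "a \<in> fsupp v \<Longrightarrow> a \<in> bclass v i d a"
  unfolding bclass_def req_def[symmetric] using req_refl by blast

lemma repr_bclass:
  assumes "a \<in> fsupp v"
  shows "repr (bclass v i d a) \<in> fsupp v" "req v i d a (repr (bclass v i d a))"
proof -
  have "repr (bclass v i d a) \<in> bclass v i d a"
    unfolding repr_def by (rule someI[of "\<lambda>x. x \<in> bclass v i d a", OF bclass_self[OF assms]])
  then show "repr (bclass v i d a) \<in> fsupp v" "req v i d a (repr (bclass v i d a))"
    unfolding bclass_def req_def by auto
qed

lemma carrier_repr:
  assumes "A \<in> bclass v i d ` fsupp v"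
  shows "repr A \<in> fsupp v" "bclass v i d (repr A) = A"
proof -
  obtain a where a: "a \<in> fsupp v" "A = bclass v i d a" using assms by blast
  show "repr A \<in> fsupp v" using repr_bclass(1)[OF a(1)] a(2) by simp
  show "bclass v i d (repr A) = A"
    using bclass_eq[OF req_sym[OF repr_bclass(2)[OF a(1)]]] a(2) by simp
qed

lemma br_carrier: "carrier (burnside_ring v i d p u) = bclass v i d ` fsupp v"
  by (simp add: burnside_ring_def Let_def)

lemma br_mult: "A \<otimes>\<^bsub>burnside_ring v i d p u\<^esub> B = bclass v i d (conv p (repr A) (repr B))"
  by (simp add: burnside_ring_def Let_def repr_def)

lemma br_add: "A \<oplus>\<^bsub>burnside_ring v i d p u\<^esub> B = bclass v i d (\<lambda>Z. repr A Z + repr B Z)"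
  by (simp add: burnside_ring_def Let_def repr_def)

lemma br_one: "\<one>\<^bsub>burnside_ring v i d p u\<^esub> = bclass v i d (delta u)"
  by (simp add: burnside_ring_def Let_def)

locale bdata =
  fixes v :: "'o \<Rightarrow> bool" and i :: "'o \<Rightarrow> 'o \<Rightarrow> bool" and d :: "'o \<Rightarrow> 'o \<Rightarrow> 'o \<Rightarrow> bool"
    and p :: "'o \<Rightarrow> 'o \<Rightarrow> 'o" and u :: 'o
  assumes vp: "v X \<Longrightarrow> v Y \<Longrightarrow> v (p X Y)"
    and vu: "v u"
    and swp: "v X \<Longrightarrow> v Y \<Longrightarrow> i (p X Y) (p Y X)"
    and isor: "v X \<Longrightarrow> v Y \<Longrightarrow> v W \<Longrightarrow> i X Y \<Longrightarrow> i (p X W) (p Y W)"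
    and decr: "v X \<Longrightarrow> v S \<Longrightarrow> v T \<Longrightarrow> v W \<Longrightarrow> d X S T \<Longrightarrow> d (p X W) (p S W) (p T W)"
begin

abbreviation "R \<equiv> relsub v i d"

lemma conv_fsupp:
  assumes "a \<in> fsupp v" "b \<in> fsupp v"
  shows "conv p a b \<in> fsupp v"
proof -
  have fa: "finite (supp a)" "\<forall>x\<in>supp a. v x" and fb: "finite (supp b)" "\<forall>x\<in>supp b. v x"
    using assms by (simp_all add: fsupp_iff)
  have "finite (supp (conv p a b))" by (rule finite_supp_conv) fact+
  moreover have "\<forall>x\<in>supp (conv p a b). v x"
  proof
    fix x assume "x \<in> supp (conv p a b)"
    then have "x \<in> (\<lambda>(X,Y). p X Y) ` (supp a \<times> supp b)" by (rule subsetD[OF supp_conv])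
    then obtain X Y where XY: "X \<in> supp a" "Y \<in> supp b" "x = p X Y"
      by auto
    have "v X" using fa(2) XY(1) by simp
    moreover have "v Y" using fb(2) XY(2) by simp
    ultimately show "v x" unfolding XY(3) by (rule vp)
  qed
  ultimately show ?thesis by (simp only: fsupp_iff)
qed

lemma gen_iso_l: "v X \<Longrightarrow> v Y \<Longrightarrow> v W \<Longrightarrow> i X Y \<Longrightarrow> (\<lambda>Z. delta (p X W) Z - delta (p Y W) Z) \<in> R"
  by (rule relsub.rel_iso) (simp_all add: vp isor)

lemma gen_swap: "v X \<Longrightarrow> v Y \<Longrightarrow> (\<lambda>Z. delta (p X Y) Z - delta (p Y X) Z) \<in> R"
  by (rule relsub.rel_iso) (simp_all add: vp swp)

lemma gen_iso_r:
  assumes "v X" "v Y" "v W" "i X Y"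
  shows "(\<lambda>Z. delta (p W X) Z - delta (p W Y) Z) \<in> R"
proof -
  have "(\<lambda>Z. (delta (p W X) Z - delta (p X W) Z) + ((delta (p X W) Z - delta (p Y W) Z)
       + (delta (p Y W) Z - delta (p W Y) Z))) \<in> R"
    by (intro relsub_add gen_swap gen_iso_l assms)
  then show ?thesis by simp
qed

lemma gen_dec_l: "v X \<Longrightarrow> v S \<Longrightarrow> v T \<Longrightarrow> v W \<Longrightarrow> d X S T \<Longrightarrow>
    (\<lambda>Z. delta (p X W) Z - delta (p S W) Z - delta (p T W) Z) \<in> R"
  by (rule relsub.rel_decomp) (simp_all add: vp decr)

lemma gen_dec_r:
  assumes "v X" "v S" "v T" "v W" "d X S T"
  shows "(\<lambda>Z. delta (p W X) Z - delta (p W S) Z - delta (p W T) Z) \<in> R"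
proof -
  have h: "(\<lambda>Z. (delta (p W X) Z - delta (p X W) Z) + ((delta (p X W) Z - delta (p S W) Z - delta (p T W) Z)
       + ((delta (p S W) Z - delta (p W S) Z) + (delta (p T W) Z - delta (p W T) Z)))) \<in> R"
    by (intro relsub_add gen_swap gen_dec_l assms)
  have eq: "(\<lambda>Z. (delta (p W X) Z - delta (p X W) Z) + ((delta (p X W) Z - delta (p S W) Z - delta (p T W) Z)
       + ((delta (p S W) Z - delta (p W S) Z) + (delta (p T W) Z - delta (p W T) Z))))
      = (\<lambda>Z. delta (p W X) Z - delta (p W S) Z - delta (p W T) Z)"
    by (rule ext) linarith
  show ?thesis using h unfolding eq .
qed

lemma push2_lincomb:
  assumes "finite (supp b)"
  shows "(\<lambda>Z. push f b Z - push g b Z) = (\<lambda>Z. \<Sum>W\<in>supp b. b W * (delta (f W) Z - delta (g W) Z))"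
  unfolding push_as_sum[OF assms] by (simp only: right_diff_distrib sum_subtractf)

lemma push3_lincomb:
  assumes "finite (supp b)"
  shows "(\<lambda>Z. push f b Z - push g b Z - push h b Z)
     = (\<lambda>Z. \<Sum>W\<in>supp b. b W * (delta (f W) Z - delta (g W) Z - delta (h W) Z))"
  unfolding push_as_sum[OF assms] by (simp only: right_diff_distrib sum_subtractf)

lemma conv_R_left:
  assumes "r \<in> R" "b \<in> fsupp v"
  shows "conv p r b \<in> R"
  using assms(1)
proof (induction rule: relsub.induct)
  case rel_zero
  then show ?case by (simp add: conv_zero_left relsub.rel_zero)
next
  case (rel_iso X Y)
  have fb: "finite (supp b)" and vb: "\<forall>W\<in>supp b. v W" using assms(2) by (simp_all add: fsupp_iff)
  have "conv p (\<lambda>Z. delta X Z - delta Y Z) b = (\<lambda>Z. push (p X) b Z - push (p Y) b Z)"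
    by (simp add: conv_diff_left finite_supp_delta fb conv_delta_left)
  also have "\<dots> = (\<lambda>Z. \<Sum>W\<in>supp b. b W * (delta (p X W) Z - delta (p Y W) Z))"
    by (rule push2_lincomb[OF fb])
  also have "\<dots> \<in> R"
    by (rule relsub_lincomb[where f="\<lambda>W Z. delta (p X W) Z - delta (p Y W) Z", OF fb])
       (use rel_iso vb gen_iso_l in auto)
  finally show ?case .
next
  case (rel_decomp X S T)
  have fb: "finite (supp b)" and vb: "\<forall>W\<in>supp b. v W" using assms(2) by (simp_all add: fsupp_iff)
  have "conv p (\<lambda>Z. delta X Z - delta S Z - delta T Z) b
      = (\<lambda>Z. push (p X) b Z - push (p S) b Z - push (p T) b Z)"
    by (simp add: conv_diff_left finite_supp_delta finite_supp_diff fb conv_delta_left)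
  also have "\<dots> = (\<lambda>Z. \<Sum>W\<in>supp b. b W * (delta (p X W) Z - delta (p S W) Z - delta (p T W) Z))"
    by (rule push3_lincomb[OF fb])
  also have "\<dots> \<in> R"
    by (rule relsub_lincomb[where f="\<lambda>W Z. delta (p X W) Z - delta (p S W) Z - delta (p T W) Z", OF fb])
       (use rel_decomp vb gen_dec_l in auto)
  finally show ?case .
next
  case (rel_diff a c)
  have fb: "finite (supp b)" using assms(2) by (simp add: fsupp_iff)
  have fa: "finite (supp a)" "finite (supp c)"
    using relsub_fsupp[OF rel_diff.hyps(1)] relsub_fsupp[OF rel_diff.hyps(2)] by (simp_all add: fsupp_iff)
  have "conv p (\<lambda>Z. a Z - c Z) b = (\<lambda>Z. conv p a b Z - conv p c b Z)"
    by (rule conv_diff_left[OF fa fb])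
  also have "\<dots> \<in> R" by (rule relsub.rel_diff) fact+
  finally show ?case .
qed

lemma conv_R_right:
  assumes "r \<in> R" "b \<in> fsupp v"
  shows "conv p b r \<in> R"
  using assms(1)
proof (induction rule: relsub.induct)
  case rel_zero
  then show ?case by (simp add: conv_zero_right relsub.rel_zero)
next
  case (rel_iso X Y)
  have fb: "finite (supp b)" and vb: "\<forall>W\<in>supp b. v W" using assms(2) by (simp_all add: fsupp_iff)
  have "conv p b (\<lambda>Z. delta X Z - delta Y Z) = (\<lambda>Z. push (\<lambda>W. p W X) b Z - push (\<lambda>W. p W Y) b Z)"
    by (simp add: conv_diff_right finite_supp_delta fb conv_delta_right)
  also have "\<dots> = (\<lambda>Z. \<Sum>W\<in>supp b. b W * (delta (p W X) Z - delta (p W Y) Z))"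
    by (rule push2_lincomb[OF fb])
  also have "\<dots> \<in> R"
    by (rule relsub_lincomb[where f="\<lambda>W Z. delta (p W X) Z - delta (p W Y) Z", OF fb])
       (use rel_iso vb gen_iso_r in auto)
  finally show ?case .
next
  case (rel_decomp X S T)
  have fb: "finite (supp b)" and vb: "\<forall>W\<in>supp b. v W" using assms(2) by (simp_all add: fsupp_iff)
  have "conv p b (\<lambda>Z. delta X Z - delta S Z - delta T Z)
      = (\<lambda>Z. push (\<lambda>W. p W X) b Z - push (\<lambda>W. p W S) b Z - push (\<lambda>W. p W T) b Z)"
    by (simp add: conv_diff_right finite_supp_delta finite_supp_diff fb conv_delta_right)
  also have "\<dots> = (\<lambda>Z. \<Sum>W\<in>supp b. b W * (delta (p W X) Z - delta (p W S) Z - delta (p W T) Z))"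
    by (rule push3_lincomb[OF fb])
  also have "\<dots> \<in> R"
    by (rule relsub_lincomb[where f="\<lambda>W Z. delta (p W X) Z - delta (p W S) Z - delta (p W T) Z", OF fb])
       (use rel_decomp vb gen_dec_r in auto)
  finally show ?case .
next
  case (rel_diff a c)
  have fb: "finite (supp b)" using assms(2) by (simp add: fsupp_iff)
  have fa: "finite (supp a)" "finite (supp c)"
    using relsub_fsupp[OF rel_diff.hyps(1)] relsub_fsupp[OF rel_diff.hyps(2)] by (simp_all add: fsupp_iff)
  have "conv p b (\<lambda>Z. a Z - c Z) = (\<lambda>Z. conv p b a Z - conv p b c Z)"
    by (rule conv_diff_right[OF fa fb])
  also have "\<dots> \<in> R" by (rule relsub.rel_diff) fact+
  finally show ?case .
qed

lemma conv_req:
  assumes "a \<in> fsupp v" "a' \<in> fsupp v" "b \<in> fsupp v" "b' \<in> fsupp v"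
    and "req v i d a a'" "req v i d b b'"
  shows "req v i d (conv p a b) (conv p a' b')"
proof -
  have f: "finite (supp a)" "finite (supp a')" "finite (supp b)" "finite (supp b')"
    using assms(1-4) by (simp_all add: fsupp_iff)
  have "(\<lambda>Z. conv p (\<lambda>Z. a Z - a' Z) b Z + conv p a' (\<lambda>Z. b Z - b' Z) Z) \<in> R"
    by (intro relsub_add conv_R_left conv_R_right assms(2,3) assms(5,6)[unfolded req_def])
  also have "(\<lambda>Z. conv p (\<lambda>Z. a Z - a' Z) b Z + conv p a' (\<lambda>Z. b Z - b' Z) Z)
       = (\<lambda>Z. conv p a b Z - conv p a' b' Z)"
    by (simp add: conv_diff_left[OF f(1,2,3)] conv_diff_right[OF f(3,4,2)])
  finally show ?thesis unfolding req_def .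
qed

end


definition ind :: "bool \<Rightarrow> int" where "ind c = (if c then 1 else 0)"

lemma sum_fiber:
  fixes a :: "'x \<Rightarrow> int"
  assumes "finite A" "finite A'" "\<And>X. X \<in> A \<Longrightarrow> \<phi> X \<in> A'"
  shows "(\<Sum>X'\<in>A'. (\<Sum>X\<in>A. if \<phi> X = X' then a X else 0) * H X') = (\<Sum>X\<in>A. a X * H (\<phi> X))"
proof -
  have "(\<Sum>X'\<in>A'. (\<Sum>X\<in>A. if \<phi> X = X' then a X else 0) * H X')
      = (\<Sum>X'\<in>A'. \<Sum>X\<in>A. if \<phi> X = X' then a X * H X' else 0)"
    by (rule sum.cong[OF refl], simp only: sum_distrib_right, rule sum.cong[OF refl], simp)
  also have "\<dots> = (\<Sum>X\<in>A. \<Sum>X'\<in>A'. if \<phi> X = X' then a X * H X' else 0)"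
    by (rule sum.swap)
  also have "\<dots> = (\<Sum>X\<in>A. a X * H (\<phi> X))"
  proof (rule sum.cong[OF refl])
    fix X assume "X \<in> A"
    then have "\<phi> X \<in> A'" by (rule assms(3))
    then show "(\<Sum>X'\<in>A'. if \<phi> X = X' then a X * H X' else 0) = a X * H (\<phi> X)"
      by (subst sum.delta'[OF assms(2)]) simp
  qed
  finally show ?thesis .
qed

lemma push_fiber:
  assumes "finite A" "supp a \<subseteq> A" "finite A'" "\<And>X. X \<in> A \<Longrightarrow> \<phi> X \<in> A'"
  shows "(\<Sum>X'\<in>A'. push \<phi> a X' * H X') = (\<Sum>X\<in>A. a X * H (\<phi> X))"
  unfolding push_expand[OF assms(1,2)] by (rule sum_fiber[OF assms(1,3,4)])

lemma conv_expand2: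
  assumes "finite A" "supp a \<subseteq> A" "finite B" "supp b \<subseteq> B"
  shows "conv p a b Z = (\<Sum>P\<in>A \<times> B. if (\<lambda>(X,Y). p X Y) P = Z then (\<lambda>(X,Y). a X * b Y) P else 0)"
  unfolding conv_expand[OF assms] sum.cartesian_product by (rule sum.cong[OF refl]) auto

lemma push_conv:
  assumes fa: "finite (supp a)" and fb: "finite (supp b)"
    and hom: "\<And>X Y. X \<in> supp a \<Longrightarrow> Y \<in> supp b \<Longrightarrow> \<phi> (p1 X Y) = p2 (\<phi> X) (\<phi> Y)"
  shows "push \<phi> (conv p1 a b) = conv p2 (push \<phi> a) (push \<phi> b)"
proof
  fix W
  let ?A = "supp a" and ?B = "supp b"
  let ?S = "(\<lambda>(X,Y). p1 X Y) ` (?A \<times> ?B)"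
  have fS: "finite ?S" using fa fb by simp
  have "push \<phi> (conv p1 a b) W = (\<Sum>Z\<in>?S. if \<phi> Z = W then conv p1 a b Z else 0)"
    by (rule push_expand[OF fS supp_conv])
  also have "\<dots> = (\<Sum>Z\<in>?S. (\<Sum>P\<in>?A \<times> ?B. if (\<lambda>(X,Y). p1 X Y) P = Z then (\<lambda>(X,Y). a X * b Y) P else 0) * ind (\<phi> Z = W))"
    by (rule sum.cong[OF refl]) (simp add: ind_def conv_expand2[OF fa order_refl fb order_refl])
  also have "\<dots> = (\<Sum>P\<in>?A \<times> ?B. (\<lambda>(X,Y). a X * b Y) P * ind (\<phi> ((\<lambda>(X,Y). p1 X Y) P) = W))"
    by (rule sum_fiber) (use fa fb in auto)
  also have "\<dots> = (\<Sum>(X,Y)\<in>?A \<times> ?B. a X * b Y * ind (p2 (\<phi> X) (\<phi> Y) = W))"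
    by (rule sum.cong[OF refl]) (auto simp: hom)
  also have "\<dots> = (\<Sum>X\<in>?A. \<Sum>Y\<in>?B. a X * b Y * ind (p2 (\<phi> X) (\<phi> Y) = W))"
    by (rule sum.cartesian_product[symmetric])
  finally have L: "push \<phi> (conv p1 a b) W = (\<Sum>X\<in>?A. \<Sum>Y\<in>?B. a X * b Y * ind (p2 (\<phi> X) (\<phi> Y) = W))" .
  have fA': "finite (\<phi> ` ?A)" "finite (\<phi> ` ?B)" using fa fb by simp_all
  have "conv p2 (push \<phi> a) (push \<phi> b) W
      = (\<Sum>X'\<in>\<phi> ` ?A. \<Sum>Y'\<in>\<phi> ` ?B. if p2 X' Y' = W then push \<phi> a X' * push \<phi> b Y' else 0)"
    by (rule conv_expand[OF fA'(1) supp_push fA'(2) supp_push])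
  also have "\<dots> = (\<Sum>X'\<in>\<phi> ` ?A. push \<phi> a X' * (\<Sum>Y'\<in>\<phi> ` ?B. push \<phi> b Y' * ind (p2 X' Y' = W)))"
    by (rule sum.cong[OF refl], simp only: sum_distrib_left, rule sum.cong[OF refl], simp add: ind_def)
  also have "\<dots> = (\<Sum>X'\<in>\<phi> ` ?A. push \<phi> a X' * (\<Sum>Y\<in>?B. b Y * ind (p2 X' (\<phi> Y) = W)))"
    by (rule sum.cong[OF refl]) (subst push_fiber[OF fb order_refl fA'(2)], auto)
  also have "\<dots> = (\<Sum>X\<in>?A. a X * (\<Sum>Y\<in>?B. b Y * ind (p2 (\<phi> X) (\<phi> Y) = W)))"
    by (rule push_fiber[OF fa order_refl fA'(1)]) auto
  also have "\<dots> = (\<Sum>X\<in>?A. \<Sum>Y\<in>?B. a X * b Y * ind (p2 (\<phi> X) (\<phi> Y) = W))"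
    by (simp add: sum_distrib_left mult.assoc)
  finally show "push \<phi> (conv p1 a b) W = conv p2 (push \<phi> a) (push \<phi> b) W" using L by simp
qed

lemma push_fsupp:
  assumes "a \<in> fsupp v1" "\<And>X. v1 X \<Longrightarrow> v2 (\<phi> X)"
  shows "push \<phi> a \<in> fsupp v2"
proof -
  have fa: "finite (supp a)" "\<forall>x\<in>supp a. v1 x" using assms(1) by (simp_all add: fsupp_iff)
  have "finite (supp (push \<phi> a))" by (rule finite_supp_push[OF fa(1)])
  moreover have "\<forall>x\<in>supp (push \<phi> a). v2 x"
  proof
    fix x assume "x \<in> supp (push \<phi> a)"
    then have "x \<in> \<phi> ` supp a" by (rule subsetD[OF supp_push])
    then obtain X where "X \<in> supp a" "x = \<phi> X" by auto
    then show "v2 x" using fa(2) assms(2) by simp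
  qed
  ultimately show ?thesis by (simp only: fsupp_iff)
qed

lemma push_relsub:
  assumes "r \<in> relsub v1 i1 d1"
    and pv: "\<And>X. v1 X \<Longrightarrow> v2 (\<phi> X)"
    and pi: "\<And>X Y. v1 X \<Longrightarrow> v1 Y \<Longrightarrow> i1 X Y \<Longrightarrow> i2 (\<phi> X) (\<phi> Y)"
    and pd: "\<And>X S T. v1 X \<Longrightarrow> v1 S \<Longrightarrow> v1 T \<Longrightarrow> d1 X S T \<Longrightarrow> d2 (\<phi> X) (\<phi> S) (\<phi> T)"
  shows "push \<phi> r \<in> relsub v2 i2 d2"
  using assms(1)
proof (induction rule: relsub.induct)
  case rel_zero
  then show ?case by (simp add: push_zero relsub.rel_zero)
next
  case (rel_iso X Y)
  have "push \<phi> (\<lambda>Z. delta X Z - delta Y Z) = (\<lambda>W. delta (\<phi> X) W - delta (\<phi> Y) W)"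
    by (simp add: push_diff finite_supp_delta push_delta)
  also have "\<dots> \<in> relsub v2 i2 d2"
    by (rule relsub.rel_iso) (use rel_iso pv pi in auto)
  finally show ?case .
next
  case (rel_decomp X S T)
  have "push \<phi> (\<lambda>Z. delta X Z - delta S Z - delta T Z) = (\<lambda>W. delta (\<phi> X) W - delta (\<phi> S) W - delta (\<phi> T) W)"
    by (simp add: push_diff finite_supp_delta finite_supp_diff push_delta)
  also have "\<dots> \<in> relsub v2 i2 d2"
    by (rule relsub.rel_decomp) (use rel_decomp pv pd in auto)
  finally show ?case .
next
  case (rel_diff a c)
  have fa: "finite (supp a)" "finite (supp c)"
    using relsub_fsupp[OF rel_diff.hyps(1)] relsub_fsupp[OF rel_diff.hyps(2)] by (simp_all add: fsupp_iff)
  have "push \<phi> (\<lambda>Z. a Z - c Z) = (\<lambda>W. push \<phi> a W - push \<phi> c W)"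
    by (rule push_diff[OF fa])
  also have "\<dots> \<in> relsub v2 i2 d2" by (rule relsub.rel_diff) fact+
  finally show ?case .
qed

lemma push_req:
  assumes "a \<in> fsupp v1" "b \<in> fsupp v1" "req v1 i1 d1 a b"
    and pv: "\<And>X. v1 X \<Longrightarrow> v2 (\<phi> X)"
    and pi: "\<And>X Y. v1 X \<Longrightarrow> v1 Y \<Longrightarrow> i1 X Y \<Longrightarrow> i2 (\<phi> X) (\<phi> Y)"
    and pd: "\<And>X S T. v1 X \<Longrightarrow> v1 S \<Longrightarrow> v1 T \<Longrightarrow> d1 X S T \<Longrightarrow> d2 (\<phi> X) (\<phi> S) (\<phi> T)"
  shows "req v2 i2 d2 (push \<phi> a) (push \<phi> b)"
proof -
  have f: "finite (supp a)" "finite (supp b)" using assms(1,2) by (simp_all add: fsupp_iff)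
  have "push \<phi> (\<lambda>Z. a Z - b Z) \<in> relsub v2 i2 d2"
    by (rule push_relsub[of "\<lambda>Z. a Z - b Z" v1 i1 d1 v2 \<phi> i2 d2, OF assms(3)[unfolded req_def] pv pi pd])
  then show ?thesis unfolding req_def push_diff[OF f] .
qed


lemma supp_add: "supp (\<lambda>Z. a Z + b Z) \<subseteq> supp a \<union> supp b"
  by (auto simp: supp_def)

lemma fsupp_add:
  assumes "a \<in> fsupp v" "b \<in> fsupp v"
  shows "(\<lambda>Z. a Z + b Z) \<in> fsupp v"
proof -
  have f: "finite (supp a)" "finite (supp b)" "\<forall>x\<in>supp a. v x" "\<forall>x\<in>supp b. v x"
    using assms by (simp_all add: fsupp_iff)
  have "finite (supp (\<lambda>Z. a Z + b Z))" by (rule finite_subset[OF supp_add]) (simp add: f)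
  moreover have "\<forall>x\<in>supp (\<lambda>Z. a Z + b Z). v x"
    using supp_add[of a b] f(3,4) by blast
  ultimately show ?thesis by (simp only: fsupp_iff)
qed

lemma push_add:
  assumes "finite (supp a)" "finite (supp b)"
  shows "push \<phi> (\<lambda>Z. a Z + b Z) = (\<lambda>W. push \<phi> a W + push \<phi> b W)"
proof
  fix W
  let ?S = "supp a \<union> supp b"
  have "finite ?S" using assms by simp
  have e1: "push \<phi> (\<lambda>Z. a Z + b Z) W = (\<Sum>X\<in>?S. if \<phi> X = W then a X + b X else 0)"
    by (rule push_expand[OF \<open>finite ?S\<close> supp_add])
  have e2: "push \<phi> a W = (\<Sum>X\<in>?S. if \<phi> X = W then a X else 0)"
    by (rule push_expand) (use assms in auto)
  have e3: "push \<phi> b W = (\<Sum>X\<in>?S. if \<phi> X = W then b X else 0)"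
    by (rule push_expand) (use assms in auto)
  show "push \<phi> (\<lambda>Z. a Z + b Z) W = push \<phi> a W + push \<phi> b W"
    unfolding e1 e2 e3 sum.distrib[symmetric]
    by (rule sum.cong[OF refl]) (cases "\<phi> x = W"; simp)
qed

lemma req_add:
  assumes "req v i d a a'" "req v i d b b'"
  shows "req v i d (\<lambda>Z. a Z + b Z) (\<lambda>Z. a' Z + b' Z)"
proof -
  have "(\<lambda>Z. (a Z - a' Z) + (b Z - b' Z)) \<in> relsub v i d"
    by (rule relsub_add) (use assms in \<open>simp_all add: req_def\<close>)
  moreover have "(\<lambda>Z. (a Z - a' Z) + (b Z - b' Z)) = (\<lambda>Z. (a Z + b Z) - (a' Z + b' Z))"
    by (rule ext) simp
  ultimately show ?thesis unfolding req_def by simp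
qed

lemma push_push_inv:
  assumes fa: "finite (supp a)" and inv: "\<And>X. X \<in> supp a \<Longrightarrow> \<psi> (\<phi> X) = X"
  shows "push \<psi> (push \<phi> a) = a"
proof
  fix W
  have fA: "finite (\<phi> ` supp a)" using fa by simp
  have "push \<psi> (push \<phi> a) W = (\<Sum>Y\<in>\<phi> ` supp a. if \<psi> Y = W then push \<phi> a Y else 0)"
    by (rule push_expand[OF fA supp_push])
  also have "\<dots> = (\<Sum>Y\<in>\<phi> ` supp a. push \<phi> a Y * ind (\<psi> Y = W))"
    by (rule sum.cong[OF refl]) (simp add: ind_def)
  also have "\<dots> = (\<Sum>X\<in>supp a. a X * ind (\<psi> (\<phi> X) = W))"
    by (rule push_fiber[OF fa order_refl fA]) simp
  also have "\<dots> = (\<Sum>X\<in>supp a. if X = W then a X else 0)"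
    by (rule sum.cong[OF refl]) (simp add: ind_def inv)
  also have "\<dots> = a W"
    by (subst sum.delta[OF fa]) (auto simp: supp_def)
  finally show "push \<psi> (push \<phi> a) W = a W" .
qed

lemma burnside_hom:
  assumes B1: "bdata v1 i1 d1 p1 u1" and B2: "bdata v2 i2 d2 p2 u2"
    and pv: "\<And>X. v1 X \<Longrightarrow> v2 (\<phi> X)"
    and pi: "\<And>X Y. v1 X \<Longrightarrow> v1 Y \<Longrightarrow> i1 X Y \<Longrightarrow> i2 (\<phi> X) (\<phi> Y)"
    and pd: "\<And>X S T. v1 X \<Longrightarrow> v1 S \<Longrightarrow> v1 T \<Longrightarrow> d1 X S T \<Longrightarrow> d2 (\<phi> X) (\<phi> S) (\<phi> T)"
    and pp: "\<And>X Y. v1 X \<Longrightarrow> v1 Y \<Longrightarrow> \<phi> (p1 X Y) = p2 (\<phi> X) (\<phi> Y)"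
    and pu: "i2 (\<phi> u1) u2"
  shows "(\<lambda>A. bclass v2 i2 d2 (push \<phi> (repr A)))
     \<in> ring_hom (burnside_ring v1 i1 d1 p1 u1) (burnside_ring v2 i2 d2 p2 u2)"
proof -
  let ?F = "\<lambda>A. bclass v2 i2 d2 (push \<phi> (repr A))"
  let ?R1 = "burnside_ring v1 i1 d1 p1 u1" and ?R2 = "burnside_ring v2 i2 d2 p2 u2"
  note PR = push_req[where \<phi>=\<phi> and ?v1.0=v1 and ?i1.0=i1 and ?d1.0=d1 and ?v2.0=v2 and ?i2.0=i2 and ?d2.0=d2, OF _ _ _ pv pi pd]
  have carr: "?F A \<in> carrier ?R2" if "A \<in> carrier ?R1" for A
  proof -
    have "repr A \<in> fsupp v1" using carrier_repr(1) that br_carrier by metis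
    then have "push \<phi> (repr A) \<in> fsupp v2" by (rule push_fsupp[where \<phi>=\<phi> and ?v2.0=v2, OF _ pv])
    then show ?thesis unfolding br_carrier by (rule imageI)
  qed
  have mult: "?F (A \<otimes>\<^bsub>?R1\<^esub> B) = ?F A \<otimes>\<^bsub>?R2\<^esub> ?F B"
    if A: "A \<in> carrier ?R1" and B: "B \<in> carrier ?R1" for A B
  proof -
    define a where "a = repr A"
    define b where "b = repr B"
    have a1: "a \<in> fsupp v1" unfolding a_def using carrier_repr(1) A br_carrier by metis
    have b1: "b \<in> fsupp v1" unfolding b_def using carrier_repr(1) B br_carrier by metis
    define c where "c = conv p1 a b"
    have c1: "c \<in> fsupp v1" unfolding c_def by (rule bdata.conv_fsupp[OF B1 a1 b1])
    have pa: "push \<phi> a \<in> fsupp v2" by (rule push_fsupp[where \<phi>=\<phi> and ?v2.0=v2, OF a1 pv])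
    have pb: "push \<phi> b \<in> fsupp v2" by (rule push_fsupp[where \<phi>=\<phi> and ?v2.0=v2, OF b1 pv])
    have pc: "push \<phi> c = conv p2 (push \<phi> a) (push \<phi> b)"
      unfolding c_def
      by (rule push_conv) (use a1 b1 pp in \<open>auto simp: fsupp_iff\<close>)
    have r1: "req v2 i2 d2 (push \<phi> c) (push \<phi> (repr (bclass v1 i1 d1 c)))"
      by (rule PR[OF c1 repr_bclass(1)[OF c1] repr_bclass(2)[OF c1]])
    have r2: "req v2 i2 d2 (conv p2 (push \<phi> a) (push \<phi> b))
        (conv p2 (repr (bclass v2 i2 d2 (push \<phi> a))) (repr (bclass v2 i2 d2 (push \<phi> b))))"
      by (rule bdata.conv_req[OF B2 pa repr_bclass(1)[OF pa] pb repr_bclass(1)[OF pb]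
            repr_bclass(2)[OF pa] repr_bclass(2)[OF pb]])
    have "req v2 i2 d2 (push \<phi> (repr (bclass v1 i1 d1 c)))
        (conv p2 (repr (bclass v2 i2 d2 (push \<phi> a))) (repr (bclass v2 i2 d2 (push \<phi> b))))"
      using req_trans[OF req_sym[OF r1] r2[folded pc]] .
    then show ?thesis
      unfolding br_mult a_def[symmetric] b_def[symmetric] c_def[symmetric]
      by (rule bclass_eq)
  qed
  have add: "?F (A \<oplus>\<^bsub>?R1\<^esub> B) = ?F A \<oplus>\<^bsub>?R2\<^esub> ?F B"
    if A: "A \<in> carrier ?R1" and B: "B \<in> carrier ?R1" for A B
  proof -
    define a where "a = repr A"
    define b where "b = repr B"
    have a1: "a \<in> fsupp v1" unfolding a_def using carrier_repr(1) A br_carrier by metis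
    have b1: "b \<in> fsupp v1" unfolding b_def using carrier_repr(1) B br_carrier by metis
    define c where "c = (\<lambda>Z. a Z + b Z)"
    have c1: "c \<in> fsupp v1" unfolding c_def by (rule fsupp_add[OF a1 b1])
    have pa: "push \<phi> a \<in> fsupp v2" by (rule push_fsupp[where \<phi>=\<phi> and ?v2.0=v2, OF a1 pv])
    have pb: "push \<phi> b \<in> fsupp v2" by (rule push_fsupp[where \<phi>=\<phi> and ?v2.0=v2, OF b1 pv])
    have pc: "push \<phi> c = (\<lambda>W. push \<phi> a W + push \<phi> b W)"
      unfolding c_def
      by (rule push_add) (use a1 b1 in \<open>auto simp: fsupp_iff\<close>)
    have r1: "req v2 i2 d2 (push \<phi> c) (push \<phi> (repr (bclass v1 i1 d1 c)))"
      by (rule PR[OF c1 repr_bclass(1)[OF c1] repr_bclass(2)[OF c1]])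
    have r2: "req v2 i2 d2 (\<lambda>W. push \<phi> a W + push \<phi> b W)
        (\<lambda>W. repr (bclass v2 i2 d2 (push \<phi> a)) W + repr (bclass v2 i2 d2 (push \<phi> b)) W)"
      by (rule req_add[OF repr_bclass(2)[OF pa] repr_bclass(2)[OF pb]])
    have "req v2 i2 d2 (push \<phi> (repr (bclass v1 i1 d1 c)))
        (\<lambda>W. repr (bclass v2 i2 d2 (push \<phi> a)) W + repr (bclass v2 i2 d2 (push \<phi> b)) W)"
      using req_trans[OF req_sym[OF r1] r2[folded pc]] .
    then show ?thesis
      unfolding br_add a_def[symmetric] b_def[symmetric] c_def[symmetric]
      by (rule bclass_eq)
  qed
  have one: "?F \<one>\<^bsub>?R1\<^esub> = \<one>\<^bsub>?R2\<^esub>"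
  proof -
    have vu1: "v1 u1" by (rule bdata.vu[OF B1])
    have vu2: "v2 u2" by (rule bdata.vu[OF B2])
    have d1: "delta u1 \<in> fsupp v1"
      unfolding fsupp_iff using finite_supp_delta[of u1] supp_delta[of u1] vu1 by auto
    have r1: "req v2 i2 d2 (push \<phi> (delta u1)) (push \<phi> (repr (bclass v1 i1 d1 (delta u1))))"
      by (rule PR[OF d1 repr_bclass(1)[OF d1] repr_bclass(2)[OF d1]])
    have r2: "req v2 i2 d2 (delta (\<phi> u1)) (delta u2)"
      unfolding req_def by (rule relsub.rel_iso) (use pv vu1 vu2 pu in auto)
    have "req v2 i2 d2 (push \<phi> (repr (bclass v1 i1 d1 (delta u1)))) (delta u2)"
      using req_trans[OF req_sym[OF r1] r2[folded push_delta]] .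
    then show ?thesis unfolding br_one by (rule bclass_eq)
  qed
  show ?thesis
    unfolding ring_hom_def using carr mult add one by auto
qed

lemma burnside_comp:
  assumes pv: "\<And>X. v1 X \<Longrightarrow> v2 (\<phi> X)"
    and qv: "\<And>X. v2 X \<Longrightarrow> v1 (\<psi> X)"
    and qi: "\<And>X Y. v2 X \<Longrightarrow> v2 Y \<Longrightarrow> i2 X Y \<Longrightarrow> i1 (\<psi> X) (\<psi> Y)"
    and qd: "\<And>X S T. v2 X \<Longrightarrow> v2 S \<Longrightarrow> v2 T \<Longrightarrow> d2 X S T \<Longrightarrow> d1 (\<psi> X) (\<psi> S) (\<psi> T)"
    and inv: "\<And>X. v1 X \<Longrightarrow> \<psi> (\<phi> X) = X"
    and A: "A \<in> carrier (burnside_ring v1 i1 d1 p1 u1)"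
  shows "bclass v1 i1 d1 (push \<psi> (repr (bclass v2 i2 d2 (push \<phi> (repr A))))) = A"
proof -
  define a where "a = repr A"
  have a1: "a \<in> fsupp v1" unfolding a_def using carrier_repr(1) A br_carrier by metis
  have aA: "bclass v1 i1 d1 a = A" unfolding a_def using carrier_repr(2) A br_carrier by metis
  have pa: "push \<phi> a \<in> fsupp v2" by (rule push_fsupp[where \<phi>=\<phi> and ?v2.0=v2, OF a1 pv])
  have r: "req v1 i1 d1 (push \<psi> (push \<phi> a)) (push \<psi> (repr (bclass v2 i2 d2 (push \<phi> a))))"
    by (rule push_req[where \<phi>=\<psi> and ?v1.0=v2 and ?i1.0=i2 and ?d1.0=d2 and ?v2.0=v1 and ?i2.0=i1 and ?d2.0=d1,
          OF pa repr_bclass(1)[OF pa] repr_bclass(2)[OF pa] qv qi qd])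
  have "push \<psi> (push \<phi> a) = a"
    by (rule push_push_inv) (use a1 inv in \<open>auto simp: fsupp_iff\<close>)
  with r have "req v1 i1 d1 (push \<psi> (repr (bclass v2 i2 d2 (push \<phi> a)))) a"
    by (simp add: req_sym)
  then have "bclass v1 i1 d1 (push \<psi> (repr (bclass v2 i2 d2 (push \<phi> a)))) = bclass v1 i1 d1 a"
    by (rule bclass_eq)
  then show ?thesis using aA by (simp add: a_def)
qed


lemma bij_dec: "bij_betw prod_decode (prod_encode ` A) A"
  by (rule bij_betw_imageI[OF inj_prod_decode]) (simp add: image_image)

lemma bij_enc_conj:
  assumes "bij_betw h A B"
  shows "bij_betw (\<lambda>n. prod_encode (h (prod_decode n))) (prod_encode ` A) (prod_encode ` B)"
proof -
  have "bij_betw (prod_encode \<circ> h \<circ> prod_decode) (prod_encode ` A) (prod_encode ` B)"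
    by (rule bij_betw_trans[OF bij_dec bij_betw_trans[OF assms bij_betw_imageI[OF inj_prod_encode refl]]])
  then show ?thesis by (simp add: comp_def)
qed

lemma img_enc: "(\<lambda>n. prod_encode (h (prod_decode n))) ` prod_encode ` A = prod_encode ` h ` A"
  by (simp add: image_image)

lemma bij_swap: "bij_betw prod.swap (A \<times> B) (B \<times> A)"
  unfolding bij_betw_def by (auto simp: inj_on_def product_swap)

lemma zprod_fst: "fst (zset_prod X Y) = prod_encode ` (fst X \<times> fst Y)"
  by (simp add: zset_prod_def)

lemma zprod_snd: "snd (zset_prod X Y) = (\<lambda>n. prod_encode (map_prod (snd X) (snd Y) (prod_decode n)))"
  by (rule ext) (simp add: zset_prod_def case_prod_beta map_prod_def)

lemma rprod_fst: "fst (rack_prod R Q) = prod_encode ` (fst R \<times> fst Q)"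
  by (simp add: rack_prod_def)

lemma rprod_snd: "snd (rack_prod R Q) =
   (\<lambda>n m. prod_encode (map_prod (snd R (fst (prod_decode n))) (snd Q (snd (prod_decode n))) (prod_decode m)))"
  by (rule ext, rule ext) (simp add: rack_prod_def case_prod_beta map_prod_def)

lemma bdata_zset: "bdata zset_valid zset_iso zset_decomp zset_prod zset_unit"
proof (unfold_locales)
  fix X Y assume "zset_valid X" "zset_valid Y"
  then show "zset_valid (zset_prod X Y)"
    unfolding zset_valid_def zprod_fst zprod_snd by (auto intro: bij_enc_conj bij_betw_map_prod)
next
  show "zset_valid zset_unit" by (simp add: zset_valid_def zset_unit_def bij_betw_def)
next
  fix X Y assume "zset_valid X" "zset_valid Y"
  show "zset_iso (zset_prod X Y) (zset_prod Y X)"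
    unfolding zset_iso_def zprod_fst zprod_snd
  proof (rule exI[where x="\<lambda>n. prod_encode (prod.swap (prod_decode n))"], intro conjI ballI)
    show "bij_betw (\<lambda>n. prod_encode (prod.swap (prod_decode n))) (prod_encode ` (fst X \<times> fst Y)) (prod_encode ` (fst Y \<times> fst X))"
      by (rule bij_enc_conj[OF bij_swap])
    fix n assume "n \<in> prod_encode ` (fst X \<times> fst Y)"
    then show "prod_encode (prod.swap (prod_decode (prod_encode (map_prod (snd X) (snd Y) (prod_decode n))))) =
        prod_encode (map_prod (snd Y) (snd X) (prod_decode (prod_encode (prod.swap (prod_decode n)))))"
      by auto
  qed
next
  fix X Y W assume vX: "zset_valid X" and vY: "zset_valid Y" and vW: "zset_valid W" and iXY: "zset_iso X Y"
  obtain h where h: "bij_betw h (fst X) (fst Y)" "\<forall>x\<in>fst X. h (snd X x) = snd Y (h x)"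
    using iXY unfolding zset_iso_def by blast
  show "zset_iso (zset_prod X W) (zset_prod Y W)"
    unfolding zset_iso_def zprod_fst zprod_snd
  proof (rule exI[where x="\<lambda>n. prod_encode (map_prod h id (prod_decode n))"], intro conjI ballI)
    show "bij_betw (\<lambda>n. prod_encode (map_prod h id (prod_decode n))) (prod_encode ` (fst X \<times> fst W)) (prod_encode ` (fst Y \<times> fst W))"
      by (rule bij_enc_conj[OF bij_betw_map_prod[OF h(1) bij_betw_id]])
    fix n assume "n \<in> prod_encode ` (fst X \<times> fst W)"
    then show "prod_encode (map_prod h id (prod_decode (prod_encode (map_prod (snd X) (snd W) (prod_decode n))))) =
        prod_encode (map_prod (snd Y) (snd W) (prod_decode (prod_encode (map_prod h id (prod_decode n)))))"
      using h(2) by auto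
  qed
next
  fix X S T W assume vX: "zset_valid X" and vS: "zset_valid S" and vT: "zset_valid T" and vW: "zset_valid W"
    and dec: "zset_decomp X S T"
  have d: "fst S \<inter> fst T = {}" "fst S \<union> fst T = fst X" "snd X ` fst S = fst S" "snd X ` fst T = fst T"
    "snd S = snd X" "snd T = snd X" using dec unfolding zset_decomp_def by auto
  have sw: "snd W ` fst W = fst W" using vW unfolding zset_valid_def bij_betw_def by auto
  show "zset_decomp (zset_prod X W) (zset_prod S W) (zset_prod T W)"
    unfolding zset_decomp_def zprod_fst zprod_snd
  proof (intro conjI)
    show "prod_encode ` (fst S \<times> fst W) \<inter> prod_encode ` (fst T \<times> fst W) = {}"
      using d(1) by auto
    show "prod_encode ` (fst S \<times> fst W) \<union> prod_encode ` (fst T \<times> fst W) = prod_encode ` (fst X \<times> fst W)"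
      unfolding d(2)[symmetric] by (simp add: Sigma_Un_distrib1 image_Un)
    show "(\<lambda>n. prod_encode (map_prod (snd X) (snd W) (prod_decode n))) ` prod_encode ` (fst S \<times> fst W) =
        prod_encode ` (fst S \<times> fst W)"
      unfolding img_enc map_prod_surj_on[OF d(3) sw] ..
    show "(\<lambda>n. prod_encode (map_prod (snd X) (snd W) (prod_decode n))) ` prod_encode ` (fst T \<times> fst W) =
        prod_encode ` (fst T \<times> fst W)"
      unfolding img_enc map_prod_surj_on[OF d(4) sw] ..
    show "(\<lambda>n. prod_encode (map_prod (snd S) (snd W) (prod_decode n))) =
        (\<lambda>n. prod_encode (map_prod (snd X) (snd W) (prod_decode n)))" by (simp add: d(5))
    show "(\<lambda>n. prod_encode (map_prod (snd T) (snd W) (prod_decode n))) =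
        (\<lambda>n. prod_encode (map_prod (snd X) (snd W) (prod_decode n)))" by (simp add: d(6))
  qed
qed


lemma bdata_rack: "bdata rack_valid rack_iso rack_decomp rack_prod rack_unit"
proof (unfold_locales)
  fix X Y assume vX: "rack_valid X" and vY: "rack_valid Y"
  have bX: "\<forall>a\<in>fst X. bij_betw (snd X a) (fst X) (fst X)" and bY: "\<forall>a\<in>fst Y. bij_betw (snd Y a) (fst Y) (fst Y)"
    using vX vY unfolding rack_valid_def by auto
  have dX: "\<forall>a\<in>fst X. \<forall>b\<in>fst X. \<forall>c\<in>fst X. snd X a (snd X b c) = snd X (snd X a b) (snd X a c)"
    and dY: "\<forall>a\<in>fst Y. \<forall>b\<in>fst Y. \<forall>c\<in>fst Y. snd Y a (snd Y b c) = snd Y (snd Y a b) (snd Y a c)"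
    using vX vY unfolding rack_valid_def by auto
  have fin: "finite (fst X)" "finite (fst Y)" using vX vY unfolding rack_valid_def by auto
  show "rack_valid (rack_prod X Y)"
    unfolding rack_valid_def rprod_fst rprod_snd
  proof (intro conjI ballI)
    show "finite (prod_encode ` (fst X \<times> fst Y))" using fin by simp
    fix n assume "n \<in> prod_encode ` (fst X \<times> fst Y)"
    then obtain a a' where n: "n = prod_encode (a, a')" "a \<in> fst X" "a' \<in> fst Y" by auto
    show "bij_betw (\<lambda>m. prod_encode (map_prod (snd X (fst (prod_decode n))) (snd Y (snd (prod_decode n))) (prod_decode m)))
        (prod_encode ` (fst X \<times> fst Y)) (prod_encode ` (fst X \<times> fst Y))"
      unfolding n(1) prod_encode_inverse fst_conv snd_conv
      by (rule bij_enc_conj[OF bij_betw_map_prod]) (use n bX bY in auto)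
  next
    fix n m k assume "n \<in> prod_encode ` (fst X \<times> fst Y)" "m \<in> prod_encode ` (fst X \<times> fst Y)"
      "k \<in> prod_encode ` (fst X \<times> fst Y)"
    then show "prod_encode (map_prod (snd X (fst (prod_decode n))) (snd Y (snd (prod_decode n)))
            (prod_decode (prod_encode (map_prod (snd X (fst (prod_decode m))) (snd Y (snd (prod_decode m))) (prod_decode k))))) =
       prod_encode (map_prod (snd X (fst (prod_decode (prod_encode (map_prod (snd X (fst (prod_decode n))) (snd Y (snd (prod_decode n))) (prod_decode m))))))
            (snd Y (snd (prod_decode (prod_encode (map_prod (snd X (fst (prod_decode n))) (snd Y (snd (prod_decode n))) (prod_decode m))))))
            (prod_decode (prod_encode (map_prod (snd X (fst (prod_decode n))) (snd Y (snd (prod_decode n))) (prod_decode k)))))"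
      using dX dY by auto
  qed
next
  show "rack_valid rack_unit" by (simp add: rack_valid_def rack_unit_def bij_betw_def)
next
  fix X Y assume "rack_valid X" "rack_valid Y"
  show "rack_iso (rack_prod X Y) (rack_prod Y X)"
    unfolding rack_iso_def rprod_fst rprod_snd
  proof (rule exI[where x="\<lambda>n. prod_encode (prod.swap (prod_decode n))"], intro conjI ballI)
    show "bij_betw (\<lambda>n. prod_encode (prod.swap (prod_decode n))) (prod_encode ` (fst X \<times> fst Y)) (prod_encode ` (fst Y \<times> fst X))"
      by (rule bij_enc_conj[OF bij_swap])
    fix n m assume "n \<in> prod_encode ` (fst X \<times> fst Y)" "m \<in> prod_encode ` (fst X \<times> fst Y)"
    then show "prod_encode (prod.swap (prod_decode (prod_encode (map_prod (snd X (fst (prod_decode n))) (snd Y (snd (prod_decode n))) (prod_decode m))))) =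
       prod_encode (map_prod (snd Y (fst (prod_decode (prod_encode (prod.swap (prod_decode n))))))
          (snd X (snd (prod_decode (prod_encode (prod.swap (prod_decode n)))))) (prod_decode (prod_encode (prod.swap (prod_decode m)))))"
      by auto
  qed
next
  fix X Y W assume vX: "rack_valid X" and vY: "rack_valid Y" and vW: "rack_valid W" and iXY: "rack_iso X Y"
  obtain h where h: "bij_betw h (fst X) (fst Y)" "\<forall>a\<in>fst X. \<forall>b\<in>fst X. h (snd X a b) = snd Y (h a) (h b)"
    using iXY unfolding rack_iso_def by blast
  show "rack_iso (rack_prod X W) (rack_prod Y W)"
    unfolding rack_iso_def rprod_fst rprod_snd
  proof (rule exI[where x="\<lambda>n. prod_encode (map_prod h id (prod_decode n))"], intro conjI ballI)
    show "bij_betw (\<lambda>n. prod_encode (map_prod h id (prod_decode n))) (prod_encode ` (fst X \<times> fst W)) (prod_encode ` (fst Y \<times> fst W))"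
      by (rule bij_enc_conj[OF bij_betw_map_prod[OF h(1) bij_betw_id]])
    fix n m assume "n \<in> prod_encode ` (fst X \<times> fst W)" "m \<in> prod_encode ` (fst X \<times> fst W)"
    then show "prod_encode (map_prod h id (prod_decode (prod_encode (map_prod (snd X (fst (prod_decode n))) (snd W (snd (prod_decode n))) (prod_decode m))))) =
       prod_encode (map_prod (snd Y (fst (prod_decode (prod_encode (map_prod h id (prod_decode n))))))
          (snd W (snd (prod_decode (prod_encode (map_prod h id (prod_decode n)))))) (prod_decode (prod_encode (map_prod h id (prod_decode m)))))"
      using h(2) by auto
  qed
next
  fix X S T W assume vX: "rack_valid X" and vS: "rack_valid S" and vT: "rack_valid T" and vW: "rack_valid W"
    and dec: "rack_decomp X S T"
  have d: "is_subrack X (fst S)" "is_subrack X (fst T)" "fst S \<inter> fst T = {}" "fst S \<union> fst T = fst X"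
    "snd S = snd X" "snd T = snd X" using dec unfolding rack_decomp_def by auto
  have sw: "\<And>a. a \<in> fst W \<Longrightarrow> snd W a ` fst W = fst W" using vW unfolding rack_valid_def bij_betw_def by auto
  have sub: "is_subrack (rack_prod X W) (prod_encode ` (fst U \<times> fst W))" if U: "is_subrack X (fst U)" for U
    unfolding is_subrack_def rprod_fst rprod_snd
  proof (intro conjI ballI)
    show "prod_encode ` (fst U \<times> fst W) \<subseteq> prod_encode ` (fst X \<times> fst W)"
      using U unfolding is_subrack_def by auto
    fix n assume "n \<in> prod_encode ` (fst U \<times> fst W)"
    then obtain a a' where n: "n = prod_encode (a, a')" "a \<in> fst U" "a' \<in> fst W" by auto
    have sa: "snd X a ` fst U = fst U" using U n(2) unfolding is_subrack_def by auto
    show "(\<lambda>m. prod_encode (map_prod (snd X (fst (prod_decode n))) (snd W (snd (prod_decode n))) (prod_decode m))) `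
          prod_encode ` (fst U \<times> fst W) = prod_encode ` (fst U \<times> fst W)"
      unfolding n(1) prod_encode_inverse fst_conv snd_conv img_enc map_prod_surj_on[OF sa sw[OF n(3)]] ..
  qed
  show "rack_decomp (rack_prod X W) (rack_prod S W) (rack_prod T W)"
    unfolding rack_decomp_def
  proof (intro conjI)
    show "is_subrack (rack_prod X W) (fst (rack_prod S W))" unfolding rprod_fst by (rule sub[OF d(1)])
    show "is_subrack (rack_prod X W) (fst (rack_prod T W))" unfolding rprod_fst by (rule sub[OF d(2)])
    show "fst (rack_prod S W) \<inter> fst (rack_prod T W) = {}"
      unfolding rprod_fst using d(3) by auto
    show "fst (rack_prod S W) \<union> fst (rack_prod T W) = fst (rack_prod X W)"
      unfolding rprod_fst d(4)[symmetric] by (simp add: Sigma_Un_distrib1 image_Un)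
    show "snd (rack_prod S W) = snd (rack_prod X W)" unfolding rprod_snd d(5) ..
    show "snd (rack_prod T W) = snd (rack_prod X W)" unfolding rprod_snd d(6) ..
  qed
qed


definition zr_map :: "zset \<Rightarrow> rack" where
  "zr_map X = (fst X, \<lambda>a b. snd X b)"

definition rz_map :: "rack \<Rightarrow> zset" where
  "rz_map R = (fst R, \<lambda>a. snd R a a)"

lemma diag_props:
  assumes "rack_valid R"
  shows "inj_on (\<lambda>a. snd R a a) (fst R)" "\<And>a. a \<in> fst R \<Longrightarrow> snd R a a \<in> fst R"
proof -
  have bij: "\<And>a. a \<in> fst R \<Longrightarrow> bij_betw (snd R a) (fst R) (fst R)"
    and distr: "\<And>a b c. a \<in> fst R \<Longrightarrow> b \<in> fst R \<Longrightarrow> c \<in> fst R \<Longrightarrow>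
        snd R a (snd R b c) = snd R (snd R a b) (snd R a c)"
    using assms unfolding rack_valid_def by auto
  have img: "\<And>a. a \<in> fst R \<Longrightarrow> snd R a ` fst R = fst R" using bij by (simp add: bij_betw_def)
  show into: "\<And>a. a \<in> fst R \<Longrightarrow> snd R a a \<in> fst R" using img by blast
  have key: "snd R (snd R a a) x = snd R a x" if a: "a \<in> fst R" and x: "x \<in> fst R" for a x
  proof -
    obtain b where b: "b \<in> fst R" "x = snd R a b" using img[OF a] x by blast
    show ?thesis unfolding b(2) using distr[OF a a b(1)] by simp
  qed
  show "inj_on (\<lambda>a. snd R a a) (fst R)"
  proof (rule inj_onI)
    fix a b assume a: "a \<in> fst R" and b: "b \<in> fst R" and e: "snd R a a = snd R b b"
    have "snd R a b = snd R (snd R a a) b" using key[OF a b] by simp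
    also have "\<dots> = snd R (snd R b b) b" using e by simp
    also have "\<dots> = snd R b b" using key[OF b b] by simp
    also have "\<dots> = snd R a a" using e by simp
    finally have "snd R a b = snd R a a" .
    moreover have "inj_on (snd R a) (fst R)" by (rule bij_betw_imp_inj_on[OF bij[OF a]])
    ultimately show "a = b" using inj_onD[of "snd R a" "fst R" b a] a b by simp
  qed
qed

lemma zr_valid: "zset_valid X \<Longrightarrow> rack_valid (zr_map X)"
  by (simp add: zset_valid_def rack_valid_def zr_map_def)

lemma zr_iso: "zset_valid X \<Longrightarrow> zset_valid Y \<Longrightarrow> zset_iso X Y \<Longrightarrow> rack_iso (zr_map X) (zr_map Y)"
proof -
  assume "zset_iso X Y"
  then obtain h where h: "bij_betw h (fst X) (fst Y)" "\<forall>x\<in>fst X. h (snd X x) = snd Y (h x)"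
    unfolding zset_iso_def by blast
  show ?thesis unfolding rack_iso_def zr_map_def fst_conv snd_conv
    by (rule exI[where x=h]) (simp add: h)
qed

lemma zr_decomp: "zset_valid X \<Longrightarrow> zset_valid S \<Longrightarrow> zset_valid T \<Longrightarrow> zset_decomp X S T \<Longrightarrow>
    rack_decomp (zr_map X) (zr_map S) (zr_map T)"
proof -
  assume "zset_decomp X S T"
  then have d: "fst S \<inter> fst T = {}" "fst S \<union> fst T = fst X" "snd X ` fst S = fst S" "snd X ` fst T = fst T"
    "snd S = snd X" "snd T = snd X" unfolding zset_decomp_def by auto
  have "fst S \<subseteq> fst X" "fst T \<subseteq> fst X" using d(2) by auto
  then show ?thesis unfolding rack_decomp_def is_subrack_def zr_map_def fst_conv snd_conv
    using d by simp
qed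

lemma zr_prod: "zr_map (zset_prod X Y) = rack_prod (zr_map X) (zr_map Y)"
  by (simp add: zr_map_def zset_prod_def rack_prod_def case_prod_beta)

lemma zr_unit: "rack_iso (zr_map zset_unit) rack_unit"
  unfolding rack_iso_def zr_map_def zset_unit_def rack_unit_def
  by (rule exI[where x=id]) (simp add: bij_betw_def)

lemma rz_valid: "rack_valid R \<Longrightarrow> zset_valid (rz_map R)"
proof -
  assume v: "rack_valid R"
  have f: "finite (fst R)" using v by (simp add: rack_valid_def)
  have "(\<lambda>a. snd R a a) ` fst R = fst R"
    by (rule endo_inj_surj[OF f]) (use diag_props[OF v] in auto)
  then show ?thesis using diag_props(1)[OF v] f
    by (simp add: zset_valid_def rz_map_def bij_betw_def)
qed

lemma rz_iso: "rack_valid X \<Longrightarrow> rack_valid Y \<Longrightarrow> rack_iso X Y \<Longrightarrow> zset_iso (rz_map X) (rz_map Y)"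
proof -
  assume "rack_iso X Y"
  then obtain h where h: "bij_betw h (fst X) (fst Y)" "\<forall>a\<in>fst X. \<forall>b\<in>fst X. h (snd X a b) = snd Y (h a) (h b)"
    unfolding rack_iso_def by blast
  show ?thesis unfolding zset_iso_def rz_map_def fst_conv snd_conv
    by (rule exI[where x=h]) (simp add: h)
qed

lemma rz_decomp:
  assumes v: "rack_valid X" and dec: "rack_decomp X S T"
  shows "zset_decomp (rz_map X) (rz_map S) (rz_map T)"
proof -
  have d: "is_subrack X (fst S)" "is_subrack X (fst T)" "fst S \<inter> fst T = {}" "fst S \<union> fst T = fst X"
    "snd S = snd X" "snd T = snd X" using dec unfolding rack_decomp_def by auto
  have f: "finite (fst X)" using v by (simp add: rack_valid_def)
  have img: "(\<lambda>a. snd X a a) ` U = U" if U: "is_subrack X U" for U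
  proof (rule endo_inj_surj)
    have Us: "U \<subseteq> fst X" using U unfolding is_subrack_def by simp
    show "finite U" by (rule finite_subset[OF Us f])
    show "(\<lambda>a. snd X a a) ` U \<subseteq> U"
    proof
      fix y assume "y \<in> (\<lambda>a. snd X a a) ` U"
      then obtain a where a: "a \<in> U" "y = snd X a a" by auto
      have "snd X a ` U = U" using U a(1) unfolding is_subrack_def by simp
      then show "y \<in> U" using a by blast
    qed
    show "inj_on (\<lambda>a. snd X a a) U"
      by (rule inj_on_subset[OF diag_props(1)[OF v] Us])
  qed
  show ?thesis
    unfolding zset_decomp_def rz_map_def fst_conv snd_conv
    using d img[OF d(1)] img[OF d(2)] by simp
qed

lemma rz_decomp':
  "rack_valid X \<Longrightarrow> rack_valid S \<Longrightarrow> rack_valid T \<Longrightarrow> rack_decomp X S T \<Longrightarrow> zset_decomp (rz_map X) (rz_map S) (rz_map T)"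
  by (rule rz_decomp)

lemma rz_prod: "rz_map (rack_prod X Y) = zset_prod (rz_map X) (rz_map Y)"
  by (simp add: rz_map_def zset_prod_def rack_prod_def case_prod_beta)

lemma rz_unit: "zset_iso (rz_map rack_unit) zset_unit"
  unfolding zset_iso_def rz_map_def zset_unit_def rack_unit_def
  by (rule exI[where x=id]) (simp add: bij_betw_def)

lemma rz_zr: "rz_map (zr_map X) = X"
  by (simp add: rz_map_def zr_map_def)

lemma rz_zr': "zset_valid X \<Longrightarrow> rz_map (zr_map X) = X"
  by (rule rz_zr)

theorem proposition6p3:
  shows "\<exists>f g. f \<in> ring_hom BZ BR \<and> g \<in> ring_hom BR BZ \<and>
           (\<forall>x\<in>carrier BZ. g (f x) = x)"
proof (intro exI conjI ballI)
  show "(\<lambda>A. bclass rack_valid rack_iso rack_decomp (push zr_map (repr A))) \<in> ring_hom BZ BR"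
    unfolding BZ_def BR_def
    by (rule burnside_hom[where \<phi>=zr_map, OF bdata_zset bdata_rack zr_valid zr_iso zr_decomp zr_prod zr_unit])
  show "(\<lambda>A. bclass zset_valid zset_iso zset_decomp (push rz_map (repr A))) \<in> ring_hom BR BZ"
    unfolding BZ_def BR_def
    by (rule burnside_hom[where \<phi>=rz_map, OF bdata_rack bdata_zset rz_valid rz_iso rz_decomp' rz_prod rz_unit])
  fix x assume x: "x \<in> carrier BZ"
  show "bclass zset_valid zset_iso zset_decomp (push rz_map (repr
      (bclass rack_valid rack_iso rack_decomp (push zr_map (repr x))))) = x"
    by (rule burnside_comp[where \<phi>=zr_map and \<psi>=rz_map and ?v1.0=zset_valid and ?v2.0=rack_valid and ?i1.0=zset_iso and ?i2.0=rack_iso and ?d1.0=zset_decomp and ?d2.0=rack_decomp, OF zr_valid rz_valid rz_iso rz_decomp' rz_zr' x[unfolded BZ_def]])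
qed

end
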